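(* Let $\gamma$ be the Euler–Mascheroni constant and $\lambda(s)=\sum_{n\ge0}(2n+1)^{-s}$ (for real $s>1$). Then $$-\lim_{x\to\infty}\left\{\Gamma(\lambda(x)-1)-3^x+\Bigl(\frac95\Bigr)^x+\Bigl(\frac97\Bigr)^x-\Bigl(\frac{27}{25}\Bigr)^x+1\right\}=\gamma .$$
   Context: $\Gamma$ is Euler's Gamma function. *)

theory Defs
  imports "HOL-Analysis.Analysis"
begin

definition dirichlet_lambda :: "real \<Rightarrow> real" where
  "dirichlet_lambda s = (\<Sum>n. (2 * real n + 1) powr (- s))"

end

theory Submission imports Defs "HOL-Real_Asymp.Real_Asymp" begin

lemma summable_g: "summable (\<lambda>n::nat. (2 * real n + 1) powr (-2::real))"
proof -
  have "summable (\<lambda>n::nat. real n powr (-2::real))" by (simp add: summable_real_powr_iff)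
  hence s: "summable (\<lambda>n::nat. real (Suc n) powr (-2::real))" by (subst summable_Suc_iff)
  show ?thesis
  proof (rule summable_comparison_test'[OF s])
    fix n :: nat assume "n \<ge> 0"
    have "(2 * real n + 1) powr (-2::real) \<le> real (Suc n) powr (-2::real)"
      by (rule powr_mono2') auto
    thus "norm ((2 * real n + 1) powr (-2::real)) \<le> real (Suc n) powr (-2::real)" by simp
  qed
qed

lemma summable_f: assumes "x \<ge> 2" shows "summable (\<lambda>n::nat. (2 * real n + 1) powr (-x))"
proof (rule summable_comparison_test'[OF summable_g])
  fix n :: nat assume "n \<ge> 0"
  have "(2 * real n + 1) powr (-x) \<le> (2 * real n + 1) powr (-2)"
    by (rule powr_mono) (use assms in auto)
  thus "norm ((2 * real n + 1) powr (-x)) \<le> (2 * real n + 1) powr (-2)" by simp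
qed

lemma lambda_split: assumes "x \<ge> 2"
  shows "dirichlet_lambda x - 1 = 3 powr (-x) + 5 powr (-x) + 7 powr (-x) + 9 powr (-x)
     + (\<Sum>n. (2 * real (n + 5) + 1) powr (-x))"
proof -
  have "dirichlet_lambda x = (\<Sum>n. (2 * real (n + 5) + 1) powr (-x)) + (\<Sum>i<5. (2 * real i + 1) powr (-x))"
    unfolding dirichlet_lambda_def by (rule suminf_split_initial_segment[OF summable_f[OF assms]])
  also have "(\<Sum>i<5. (2 * real i + 1) powr (-x)) = 1 + 3 powr (-x) + 5 powr (-x) + 7 powr (-x) + 9 powr (-x)"
    by (simp add: numeral_eq_Suc lessThan_Suc)
  finally show ?thesis by simp
qed

definition TT :: real where "TT = (\<Sum>n. (2 * real (n + 5) + 1) powr (-2::real))"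

lemma R_bound: assumes "x \<ge> 2"
  shows "0 \<le> (\<Sum>n. (2 * real (n + 5) + 1) powr (-x))"
    and "(\<Sum>n. (2 * real (n + 5) + 1) powr (-x)) \<le> TT * 11 powr (2 - x)"
proof -
  have sf: "summable (\<lambda>n. (2 * real (n + 5) + 1) powr (-x))"
    using summable_f[OF assms] by (subst summable_iff_shift) 
  have sg: "summable (\<lambda>n. (2 * real (n + 5) + 1) powr (-2::real))"
    using summable_g by (subst summable_iff_shift)
  show "0 \<le> (\<Sum>n. (2 * real (n + 5) + 1) powr (-x))"
    by (rule suminf_nonneg[OF sf]) simp
  have "(\<Sum>n. (2 * real (n + 5) + 1) powr (-x)) \<le> (\<Sum>n. (2 * real (n + 5) + 1) powr (-2::real) * 11 powr (2 - x))"
  proof (rule suminf_le[OF _ sf summable_mult2[OF sg]])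
    fix n :: nat
    let ?y = "2 * real (n + 5) + 1"
    have y: "?y \<ge> 11" by simp
    have "?y powr (-x) = ?y powr (-2) * ?y powr (2 - x)" by (simp add: powr_add[symmetric])
    also have "?y powr (2 - x) \<le> 11 powr (2 - x)"
      by (rule powr_mono2') (use assms y in auto)
    hence "?y powr (-2) * ?y powr (2 - x) \<le> ?y powr (-2) * 11 powr (2 - x)"
      by (intro mult_left_mono) auto
    finally show "?y powr (-x) \<le> ?y powr (-2) * 11 powr (2 - x)" .
  qed
  also have "\<dots> = TT * 11 powr (2 - x)" unfolding TT_def by (rule suminf_mult2[symmetric, OF sg])
  finally show "(\<Sum>n. (2 * real (n + 5) + 1) powr (-x)) \<le> TT * 11 powr (2 - x)" .
qed

lemma alg:
  fixes A b c d R N :: real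
  assumes A: "A > 0" and b: "b \<ge> 0" and c: "c \<ge> 0" and d: "d \<ge> 0" and R: "R \<ge> 0" "R \<le> N"
    and Ad: "A*A*d = 1" and cb: "c \<le> b" and db: "d \<le> b" and Nb: "N \<le> b"
  shows "\<bar>1/(1/A+b+c+d+R) - A + A*A*b + A*A*c - A*A*A*b*b + 1\<bar>
     \<le> A*A*N + 5*(A*A*A*b*c + A*A*A*b*d + A*A*A*b*N) + 64*(A*A*A*A*b*b*b)"
proof -
  define u where "u = A*(b+c+d+R)"
  have u: "u \<ge> 0" using assms by (simp add: u_def)
  have e: "1/A+b+c+d+R = (1+u)/A" using A by (simp add: u_def field_simps)
  have id: "1/(1/A+b+c+d+R) - A + A*A*b + A*A*c - A*A*A*b*b + 1
     = - (A*A*R) + A*A*A*(c+d+R)*(2*b+c+d+R) - A*u^3/(1+u)"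
    unfolding e using A u Ad
    by (simp add: field_simps u_def power3_eq_cube) algebra
  have t1: "A*A*R \<le> A*A*N" using A R by (simp add: mult_left_mono)
  have t2: "0 \<le> A*A*A*(c+d+R)*(2*b+c+d+R)" using assms by simp
  have t3: "A*A*A*(c+d+R)*(2*b+c+d+R) \<le> (A*A*A*(c+d+N))*(5*b)"
    using assms by (intro mult_mono mult_left_mono) auto
  have t3': "(A*A*A*(c+d+N))*(5*b) = 5*(A*A*A*b*c + A*A*A*b*d + A*A*A*b*N)"
    by (simp add: algebra_simps)
  have t4: "0 \<le> A*u^3/(1+u)" using A u by simp
  have "u^3 \<le> u^3*(1+u)" using u mult_left_mono[of 1 "1+u" "u^3"] by simp
  hence t5: "A*u^3/(1+u) \<le> A*u^3" using A u
    by (simp add: divide_le_eq mult_left_mono)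
  have t6: "u^3 \<le> (A*(4*b))^3" unfolding u_def using assms
    by (intro power_mono mult_left_mono) auto
  have t7: "A*u^3 \<le> 64*(A*A*A*A*b*b*b)" using mult_left_mono[OF t6, of A] A
    by (simp add: power3_eq_cube algebra_simps)
  have t0: "0 \<le> A*A*R" using A R by simp
  show ?thesis unfolding id abs_le_iff using t0 t1 t2 t3 t3' t4 t5 t7 by linarith
qed

lemma gamma_lim: "((\<lambda>e::real. Gamma e - 1/e) \<longlongrightarrow> - euler_mascheroni) (at_right 0)"
proof -
  have "(Gamma has_field_derivative Gamma 1 * Digamma 1) (at (1::real))"
    by (rule has_field_derivative_Gamma) auto
  hence "(Gamma has_field_derivative - euler_mascheroni) (at (1::real))" by simp
  hence "((\<lambda>h. (Gamma (1 + h) - Gamma 1) / h) \<longlongrightarrow> - euler_mascheroni) (at (0::real))"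
    by (simp add: DERIV_def)
  hence L: "((\<lambda>h. (Gamma (1 + h) - Gamma 1) / h) \<longlongrightarrow> - euler_mascheroni) (at_right (0::real))"
    by (rule tendsto_mono[rotated]) (simp add: at_within_le_at)
  have "eventually (\<lambda>h::real. h > 0) (at_right 0)" by (simp add: eventually_at_right_less)
  hence "eventually (\<lambda>h::real. (Gamma (1 + h) - Gamma 1) / h = Gamma h - 1/h) (at_right 0)"
  proof (rule eventually_mono)
    fix h :: real assume h: "h > 0"
    have "h \<notin> \<int>\<^sub>\<le>\<^sub>0" using h by (auto elim!: nonpos_Ints_cases)
    hence "Gamma (h + 1) = h * Gamma h" by (rule Gamma_plus1)
    thus "(Gamma (1 + h) - Gamma 1) / h = Gamma h - 1/h" using h by (simp add: field_simps add.commute)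
  qed
  thus ?thesis by (rule Lim_transform_eventually[OF L])
qed

lemma pw: "((\<lambda>x::real. (9/10) powr x + 5*((27/35) powr x + (3/5) powr x + (27/50) powr x)
    + 64 * (81/125) powr x) \<longlongrightarrow> 0) at_top"
  apply (intro tendsto_add_zero tendsto_mult_right_zero)
  apply real_asymp+
  done

lemma ev_bound: "eventually (\<lambda>x::real. TT * 11 powr (2 - x) \<le> 10 powr (-x)) at_top"
proof -
  have "((\<lambda>x::real. 121 * TT * (10/11) powr x) \<longlongrightarrow> 0) at_top" by real_asymp
  hence "eventually (\<lambda>x::real. 121 * TT * (10/11) powr x < 1) at_top"
    by (rule order_tendstoD) simp
  thus ?thesis
  proof (rule eventually_mono)
    fix x :: real assume h: "121 * TT * (10/11) powr x < 1"
    have eq: "TT * 11 powr (2 - x) = (121 * TT * (10/11) powr x) * 10 powr (-x)"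
      by (simp add: powr_diff powr_minus_divide powr_divide)
    have "(121 * TT * (10/11) powr x) * 10 powr (-x) \<le> 1 * 10 powr (-x)"
      using h by (intro mult_right_mono) auto
    thus "TT * 11 powr (2 - x) \<le> 10 powr (-x)" using eq by linarith
  qed
qed

theorem mainTheorem12:
  shows "((\<lambda>x::real. Gamma (dirichlet_lambda x - 1) - 3 powr x + (9/5) powr x
            + (9/7) powr x - (27/25) powr x + 1) \<longlongrightarrow> - euler_mascheroni) at_top"
proof -
  define eps where "eps x = dirichlet_lambda x - 1" for x :: real
  define R where "R x = (\<Sum>n. (2 * real (n + 5) + 1) powr (-x))" for x :: real
  have EV: "eventually (\<lambda>x::real. x \<ge> 2 \<and> TT * 11 powr (2 - x) \<le> 10 powr (-x)) at_top"
    using ev_bound eventually_ge_at_top[of "2::real"] by eventually_elim auto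
  have P: "eps x = 3 powr (-x) + 5 powr (-x) + 7 powr (-x) + 9 powr (-x) + R x \<and> 0 \<le> R x \<and> R x \<le> 10 powr (-x)"
    if "x \<ge> 2 \<and> TT * 11 powr (2 - x) \<le> 10 powr (-x)" for x
    using that lambda_split[of x] R_bound[of x] unfolding eps_def R_def by auto
  have pos: "eventually (\<lambda>x. eps x > 0) at_top"
    using EV by eventually_elim (use P in \<open>fastforce intro: add_pos_nonneg\<close>)
  have up: "eventually (\<lambda>x. eps x \<le> 3 powr (-x) + 5 powr (-x) + 7 powr (-x) + 9 powr (-x) + 10 powr (-x)) at_top"
    using EV by eventually_elim (use P in fastforce)
  have "((\<lambda>x::real. 3 powr (-x) + 5 powr (-x) + 7 powr (-x) + 9 powr (-x) + 10 powr (-x)) \<longlongrightarrow> 0) at_top"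
    by (intro tendsto_add_zero; real_asymp)
  note lim = this
  have lo: "eventually (\<lambda>x. (\<lambda>_. 0::real) x \<le> eps x) at_top" using pos by eventually_elim simp
  have "(eps \<longlongrightarrow> 0) at_top"
    by (rule tendsto_sandwich[OF lo up tendsto_const lim])
  hence fl: "filterlim eps (at_right 0) at_top"
    by (rule tendsto_imp_filterlim_at_right[OF _ pos])
  have G: "((\<lambda>x. Gamma (eps x) - 1 / eps x) \<longlongrightarrow> - euler_mascheroni) at_top"
    by (rule filterlim_compose[OF gamma_lim fl])
  have H: "((\<lambda>x::real. 1 / eps x - 3 powr x + (9/5) powr x + (9/7) powr x - (27/25) powr x + 1) \<longlongrightarrow> 0) at_top"
  proof (rule Lim_null_comparison[OF _ pw])
    show "eventually (\<lambda>x::real. norm (1 / eps x - 3 powr x + (9/5) powr x + (9/7) powr x - (27/25) powr x + 1)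
       \<le> (9/10) powr x + 5*((27/35) powr x + (3/5) powr x + (27/50) powr x) + 64 * (81/125) powr x) at_top"
      using EV
    proof eventually_elim
      case (elim x)
      note p = P[OF elim]
      have x0: "x \<ge> 0" using elim by simp
      have cb: "7 powr (-x) \<le> 5 powr (-x)" by (rule powr_mono2') (use x0 in auto)
      have db: "9 powr (-x) \<le> 5 powr (-x)" by (rule powr_mono2') (use x0 in auto)
      have Nb: "10 powr (-x) \<le> 5 powr (-x)" by (rule powr_mono2') (use x0 in auto)
      have Ad: "3 powr x * 3 powr x * 9 powr (-x) = (1::real)"
        by (simp add: powr_mult[symmetric] powr_minus_divide)
      have inv: "1 / 3 powr x = 3 powr (-x)" by (simp add: powr_minus_divide)
      have B: "\<bar>1/(1/3 powr x + 5 powr (-x) + 7 powr (-x) + 9 powr (-x) + R x) - 3 powr x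
          + 3 powr x * 3 powr x * 5 powr (-x) + 3 powr x * 3 powr x * 7 powr (-x)
          - 3 powr x * 3 powr x * 3 powr x * 5 powr (-x) * 5 powr (-x) + 1\<bar>
         \<le> 3 powr x * 3 powr x * 10 powr (-x) + 5*(3 powr x * 3 powr x * 3 powr x * 5 powr (-x) * 7 powr (-x)
          + 3 powr x * 3 powr x * 3 powr x * 5 powr (-x) * 9 powr (-x)
          + 3 powr x * 3 powr x * 3 powr x * 5 powr (-x) * 10 powr (-x))
          + 64*(3 powr x * 3 powr x * 3 powr x * 3 powr x * 5 powr (-x) * 5 powr (-x) * 5 powr (-x))"
        by (rule alg) (use p cb db Nb Ad in auto)
      have e1: "3 powr x * 3 powr x * 5 powr (-x) = (9/5::real) powr x"
        by (simp add: powr_mult[symmetric] powr_minus_divide powr_divide)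
      have e2: "3 powr x * 3 powr x * 7 powr (-x) = (9/7::real) powr x"
        by (simp add: powr_mult[symmetric] powr_minus_divide powr_divide)
      have e3: "3 powr x * 3 powr x * 3 powr x * 5 powr (-x) * 5 powr (-x) = (27/25::real) powr x"
        by (simp add: powr_mult[symmetric] powr_minus_divide powr_divide)
      have e4: "3 powr x * 3 powr x * 10 powr (-x) = (9/10::real) powr x"
        by (simp add: powr_mult[symmetric] powr_minus_divide powr_divide)
      have e5: "3 powr x * 3 powr x * 3 powr x * 5 powr (-x) * 7 powr (-x) = (27/35::real) powr x"
        by (simp add: powr_mult[symmetric] powr_minus_divide powr_divide)
      have e6: "3 powr x * 3 powr x * 3 powr x * 5 powr (-x) * 9 powr (-x) = (3/5::real) powr x"
      proof -
        have "3 powr x * 3 powr x * 3 powr x * 5 powr (-x) * 9 powr (-x)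
            = (3 powr x * 3 powr x * 9 powr (-x)) * (3 powr x * 5 powr (-x))" by (simp add: algebra_simps)
        also have "\<dots> = 3 powr x * 5 powr (-x)" using Ad by simp
        also have "\<dots> = (3/5::real) powr x" by (simp add: powr_minus_divide powr_divide)
        finally show ?thesis .
      qed
      have e7: "3 powr x * 3 powr x * 3 powr x * 5 powr (-x) * 10 powr (-x) = (27/50::real) powr x"
        by (simp add: powr_mult[symmetric] powr_minus_divide powr_divide)
      have e8: "3 powr x * 3 powr x * 3 powr x * 3 powr x * 5 powr (-x) * 5 powr (-x) * 5 powr (-x) = (81/125::real) powr x"
        by (simp add: powr_mult[symmetric] powr_minus_divide powr_divide)
      have ee: "eps x = 1/3 powr x + 5 powr (-x) + 7 powr (-x) + 9 powr (-x) + R x"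
        using p inv by simp
      show ?case using B unfolding e1 e2 e3 e4 e5 e6 e7 e8 ee[symmetric] by simp
    qed
  qed
  have "((\<lambda>x. (Gamma (eps x) - 1 / eps x) + (1 / eps x - 3 powr x + (9/5) powr x + (9/7) powr x - (27/25) powr x + 1))
     \<longlongrightarrow> - euler_mascheroni + 0) at_top"
    by (rule tendsto_add[OF G H])
  hence L: "((\<lambda>x. (Gamma (eps x) - 1 / eps x) + (1 / eps x - 3 powr x + (9/5) powr x + (9/7) powr x - (27/25) powr x + 1))
     \<longlongrightarrow> - euler_mascheroni) at_top" by simp
  have "(\<lambda>x::real. Gamma (dirichlet_lambda x - 1) - 3 powr x + (9/5) powr x
            + (9/7) powr x - (27/25) powr x + 1) = (\<lambda>x. (Gamma (eps x) - 1 / eps x) + (1 / eps x - 3 powr x + (9/5) powr x + (9/7) powr x - (27/25) powr x + 1))"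
    by (rule ext) (simp add: eps_def)
  thus ?thesis using L by simp
qed

end
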